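(* Fix $a, b > 0$, $\delta_1, \delta_2 > 0$, $0 < x < 1$, and $\varepsilon_{2,1}, \varepsilon_{2,2} > 0$. Let $l_1$ be a positive integer such that $$1 - e^{-\delta_2}\sum_{l=0}^{l_1-1}\frac{\delta_2^l}{l!} < \varepsilon_{2,1}.$$ For each $l = 0, 1, \dots, l_1-1$, let $m_l$ be a nonnegative integer such that $$e^{-\delta_2}\frac{\delta_2^l}{l!}\Big(1 - e^{-\delta_1}\sum_{j=0}^{m_l-1}\frac{\delta_1^j}{j!}\Big) < \varepsilon_{2,2}.$$ Define the truncated sum $\hat B = \sum_{l=0}^{l_1-1}\sum_{j=0}^{m_l-1} L_{j,l}$. Define $$U2_{a,b}^{\delta_1,\delta_2}(x) = 1 - e^{-(\delta_1+\delta_2)}\sum_{l=0}^{l_1-1}\frac{\delta_2^l}{l!}\sum_{j=0}^{m_l-1}\frac{\delta_1^j}{j!}.$$ Then $$B_{a,b}^{\delta_1,\delta_2}(x) - \hat B < U2_{a,b}^{\delta_1,\delta_2}(x) < \varepsilon_{2,1} + l_1\varepsilon_{2,2}.$$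
   Context: For $p, q > 0$, $I_x(p,q) = \frac{\int_0^x t^{p-1}(1-t)^{q-1}\,dt}{B(p,q)}$ is the regularized incomplete beta function, where $B(p,q) = \Gamma(p)\Gamma(q)/\Gamma(p+q)$. The CDF of the doubly non-central beta distribution with parameters $a, b$ and $\delta_1, \delta_2$ is $$B_{a,b}^{\delta_1,\delta_2}(x) = \sum_{j=0}^\infty\sum_{l=0}^\infty L_{j,l}, \qquad L_{j,l} = e^{-(\delta_1+\delta_2)}\frac{\delta_1^j\delta_2^l}{j!\,l!}\,I_x(j+a, l+b).$$ Empty sums are zero. *)

theory Defs
  imports "HOL-Analysis.Analysis"
begin

definition inc_beta_reg :: "real \<Rightarrow> real \<Rightarrow> real \<Rightarrow> real" where
  "inc_beta_reg x p q =
     (LBINT t=0..x. t powr (p - 1) * (1 - t) powr (q - 1)) / Beta p q"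

definition dncb_term :: "real \<Rightarrow> real \<Rightarrow> real \<Rightarrow> real \<Rightarrow> real \<Rightarrow> nat \<Rightarrow> nat \<Rightarrow> real" where
  "dncb_term a b d1 d2 x j l =
     exp (-(d1 + d2)) * (d1 ^ j * d2 ^ l / (fact j * fact l))
       * inc_beta_reg x (real j + a) (real l + b)"

definition dncb_cdf :: "real \<Rightarrow> real \<Rightarrow> real \<Rightarrow> real \<Rightarrow> real \<Rightarrow> real" where
  "dncb_cdf a b d1 d2 x = (\<Sum>j. \<Sum>l. dncb_term a b d1 d2 x j l)"

end

theory Submission
  imports Defs
begin

lemma inc_beta_bounds:
  fixes x p q :: real
  assumes "0 < x" "x < 1" "p > 0" "q > 0"
  shows "0 \<le> inc_beta_reg x p q \<and> inc_beta_reg x p q < 1"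
proof -
  define f where "f = (\<lambda>t::real. t powr (p - 1) * (1 - t) powr (q - 1))"
  have hB: "(f has_integral Beta p q) {0..1}"
    unfolding f_def using has_integral_Beta_real[OF assms(3,4)] .
  have Bpos: "Beta p q > 0" using assms by (simp add: Beta_def Gamma_real_pos)
  have fnn: "\<And>t. 0 \<le> f t" unfolding f_def by simp
  have int01: "f integrable_on {0..1}" using hB by blast
  have "f absolutely_integrable_on {0..1}"
    by (rule nonnegative_absolutely_integrable_1[OF int01]) (simp add: fnn)
  hence "integrable lebesgue (\<lambda>t. indicat_real {0..1} t *\<^sub>R f t)"
    unfolding set_integrable_def .
  hence "integrable lborel (\<lambda>t. indicat_real {0..1} t *\<^sub>R f t)"
    by (subst (asm) integrable_completion) (auto simp: f_def)
  hence si01: "set_integrable lborel {0..1} f" unfolding set_integrable_def .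
  have si0x: "set_integrable lborel {0..x} f"
    by (rule set_integrable_subset[OF si01]) (use assms in auto)
  have L: "(LBINT t=0..x. f t) = integral {0..x} f"
    using interval_integral_eq_integral[of 0 x f] assms si0x by (simp add: zero_ereal_def)
  have int0x: "f integrable_on {0..x}"
    by (rule integrable_subinterval_real[OF int01]) (use assms in auto)
  have intx1: "f integrable_on {x..1}"
    by (rule integrable_subinterval_real[OF int01]) (use assms in auto)
  have comb: "integral {0..x} f + integral {x..1} f = integral {0..1} f"
    using Henstock_Kurzweil_Integration.integral_combine[where a=0 and c=x and b=1 and f=f] assms int01 by auto
  have B: "integral {0..1} f = Beta p q" using hB by (rule integral_unique)
  define c where "c = (1 + x) / 2"
  have c: "x < c" "c < 1" using assms by (auto simp: c_def)
  have contc: "continuous_on {x..c} f"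
    unfolding f_def using assms c
    by (intro continuous_intros) auto
  have "integral {x..c} (\<lambda>t. 0) < integral {x..c} f"
    by (rule integral_less_real) (use c contc assms in \<open>auto simp: f_def\<close>)
  hence pos1: "0 < integral {x..c} f" by simp
  have "integral {x..c} f \<le> integral {x..1} f"
    by (rule integral_subset_le) (use c intx1 fnn in \<open>auto intro: integrable_subinterval_real[OF intx1]\<close>)
  hence pos: "0 < integral {x..1} f" using pos1 by linarith
  have nn: "0 \<le> integral {0..x} f"
    by (rule integral_nonneg[OF int0x]) (simp add: fnn)
  have "inc_beta_reg x p q = integral {0..x} f / Beta p q"
    unfolding inc_beta_reg_def using L by (simp add: f_def)
  moreover have "integral {0..x} f < Beta p q" using pos comb B by linarith
  ultimately show ?thesis using nn Bpos by simp
qed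

lemma exp_sums1:
  fixes d :: real
  shows "(\<lambda>n. exp (-d) * (d ^ n / fact n)) sums 1"
proof -
  have "(\<lambda>n. d ^ n / fact n) sums exp d" using exp_converges[of d]
    by (simp add: divide_inverse mult.commute)
  from sums_mult[OF this, of "exp (-d)"] show ?thesis by (simp add: exp_minus field_simps)
qed

theorem mainTheorem4:
  fixes a b d1 d2 x eps21 eps22 :: real and l1 :: nat and m :: "nat \<Rightarrow> nat"
  assumes "a > 0" "b > 0" "d1 > 0" "d2 > 0" "0 < x" "x < 1" "eps21 > 0" "eps22 > 0"
    and "l1 > 0"
    and "1 - exp (-d2) * (\<Sum>l<l1. d2 ^ l / fact l) < eps21"
    and "\<forall>l<l1. exp (-d2) * (d2 ^ l / fact l) * (1 - exp (-d1) * (\<Sum>j<m l. d1 ^ j / fact j)) < eps22"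
  shows "dncb_cdf a b d1 d2 x - (\<Sum>l<l1. \<Sum>j<m l. dncb_term a b d1 d2 x j l)
           < 1 - exp (-(d1 + d2)) * (\<Sum>l<l1. d2 ^ l / fact l * (\<Sum>j<m l. d1 ^ j / fact j))
       \<and> 1 - exp (-(d1 + d2)) * (\<Sum>l<l1. d2 ^ l / fact l * (\<Sum>j<m l. d1 ^ j / fact j))
           < eps21 + real l1 * eps22"
proof -
  define p1 where "p1 = (\<lambda>j::nat. exp (-d1) * (d1 ^ j / fact j))"
  define p2 where "p2 = (\<lambda>l::nat. exp (-d2) * (d2 ^ l / fact l))"
  define I where "I = (\<lambda>j l::nat. inc_beta_reg x (real j + a) (real l + b))"
  define L where "L = dncb_term a b d1 d2 x"
  define g where "g = (\<lambda>j l. p1 j * p2 l * (1 - I j l))"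
  have e: "exp (-(d1+d2)) = exp (-d1) * exp (-d2)" by (simp add: exp_add[symmetric])
  have Leq: "L j l = p1 j * p2 l * I j l" for j l
    unfolding L_def dncb_term_def p1_def p2_def I_def e by (simp add: field_simps)
  have Ib: "0 \<le> I j l \<and> I j l < 1" for j l
    unfolding I_def using inc_beta_bounds assms by (simp add: add_nonneg_pos)
  have p1pos: "p1 j > 0" for j unfolding p1_def using assms by simp
  have p2pos: "p2 l > 0" for l unfolding p2_def using assms by simp
  have p1s: "p1 sums 1" unfolding p1_def by (rule exp_sums1)
  have p2s: "p2 sums 1" unfolding p2_def by (rule exp_sums1)
  have gpos: "g j l > 0" for j l unfolding g_def using Ib[of j l] p1pos[of j] p2pos[of l] by simp
  have Lnn: "0 \<le> L j l" for j l using Leq[of j l] Ib[of j l] p1pos[of j] p2pos[of l] by simp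
  have wjs: "(\<lambda>l. p1 j * p2 l) sums p1 j" for j using sums_mult[OF p2s, of "p1 j"] by simp
  have Lle: "L j l \<le> p1 j * p2 l" for j l
    using Leq[of j l] Ib[of j l] p1pos[of j] p2pos[of l] by (simp add: mult_left_le)
  have sL: "summable (L j)" for j
    by (rule summable_comparison_test[OF _ sums_summable[OF wjs[of j]]]) (use Lnn Lle in auto)
  define S1 where "S1 = (\<lambda>j. \<Sum>l. L j l)"
  have S1le: "S1 j \<le> p1 j" for j
    unfolding S1_def using suminf_le[OF Lle sL sums_summable[OF wjs[of j]]] sums_unique[OF wjs[of j]]
    by simp
  have S1nn: "0 \<le> S1 j" for j unfolding S1_def by (rule suminf_nonneg[OF sL]) (use Lnn in auto)
  have sS1: "summable S1"
    by (rule summable_comparison_test[OF _ sums_summable[OF p1s]]) (use S1le S1nn in auto)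
  define G where "G = (\<lambda>j. p1 j - S1 j)"
  have gs: "(g j) sums G j" for j
  proof -
    have "(\<lambda>l. p1 j * p2 l - L j l) sums (p1 j - S1 j)"
      unfolding S1_def by (rule sums_diff[OF wjs summable_sums[OF sL]])
    thus ?thesis unfolding G_def g_def using Leq by (simp add: algebra_simps)
  qed
  have Gs: "G sums (1 - dncb_cdf a b d1 d2 x)"
  proof -
    have "dncb_cdf a b d1 d2 x = suminf S1" unfolding dncb_cdf_def S1_def L_def by simp
    thus ?thesis unfolding G_def using sums_diff[OF p1s summable_sums[OF sS1]] by simp
  qed
  have Gnn: "0 \<le> G j" for j using S1le[of j] by (simp add: G_def)
  define T where "T = Sigma {..<l1} (\<lambda>l. {..<m l})"
  define h where "h = (\<lambda>(l, j). g j l)"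
  have finT: "finite T" unfolding T_def by auto
  have nT: "(0, m 0) \<notin> T" unfolding T_def by auto
  define N where "N = l1 + (\<Sum>l<l1. m l) + m 0 + 1"
  have sub: "insert (0, m 0) T \<subseteq> {..<N} \<times> {..<N}"
  proof
    fix z assume "z \<in> insert (0, m 0) T"
    then show "z \<in> {..<N} \<times> {..<N}"
    proof
      assume "z = (0, m 0)" thus ?thesis by (auto simp: N_def)
    next
      assume "z \<in> T"
      then obtain l j where z: "z = (l, j)" "l < l1" "j < m l" unfolding T_def by auto
      have "m l \<le> (\<Sum>l<l1. m l)" using z by (intro member_le_sum) auto
      thus ?thesis using z by (auto simp: N_def)
    qed
  qed
  have "h (0, m 0) + sum h T = sum h (insert (0, m 0) T)" using finT nT by simp
  also have "\<dots> \<le> sum h ({..<N} \<times> {..<N})"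
    by (rule sum_mono2) (use sub gpos in \<open>auto simp: h_def less_imp_le\<close>)
  also have "\<dots> = (\<Sum>l<N. \<Sum>j<N. g j l)" by (simp add: sum.cartesian_product h_def)
  also have "\<dots> = (\<Sum>j<N. \<Sum>l<N. g j l)" by (rule sum.swap)
  also have "\<dots> \<le> (\<Sum>j<N. G j)"
    by (rule sum_mono, rule sum_le_suminf[OF sums_summable[OF gs], of _ _, simplified sums_unique[OF gs, symmetric]])
       (use gpos in \<open>auto simp: less_imp_le\<close>)
  also have "\<dots> \<le> 1 - dncb_cdf a b d1 d2 x"
    using sum_le_suminf[OF sums_summable[OF Gs], of "{..<N}"] Gnn sums_unique[OF Gs] by simp
  finally have key: "h (0, m 0) + sum h T \<le> 1 - dncb_cdf a b d1 d2 x" .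
  have hpos: "h (0, m 0) > 0" using gpos by (simp add: h_def)
  have sumT: "sum h T = (\<Sum>l<l1. \<Sum>j<m l. g j l)" unfolding T_def h_def by (simp add: sum.Sigma)
  define W where "W = (\<Sum>l<l1. \<Sum>j<m l. p1 j * p2 l)"
  have Weq: "exp (-(d1 + d2)) * (\<Sum>l<l1. d2 ^ l / fact l * (\<Sum>j<m l. d1 ^ j / fact j)) = W"
    unfolding W_def p1_def p2_def e by (simp add: sum_distrib_left mult_ac)
  have Bh: "(\<Sum>l<l1. \<Sum>j<m l. dncb_term a b d1 d2 x j l) = W - (\<Sum>l<l1. \<Sum>j<m l. g j l)"
    unfolding W_def g_def L_def[symmetric] Leq by (simp add: sum_subtractf[symmetric] algebra_simps)
  have part1: "dncb_cdf a b d1 d2 x - (\<Sum>l<l1. \<Sum>j<m l. dncb_term a b d1 d2 x j l)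
           < 1 - exp (-(d1 + d2)) * (\<Sum>l<l1. d2 ^ l / fact l * (\<Sum>j<m l. d1 ^ j / fact j))"
    unfolding Weq Bh using key hpos sumT by linarith
  have W2: "W = (\<Sum>l<l1. p2 l * (exp (-d1) * (\<Sum>j<m l. d1 ^ j / fact j)))"
    unfolding W_def p1_def by (simp add: sum_distrib_left mult_ac)
  have split: "1 - W = (1 - exp (-d2) * (\<Sum>l<l1. d2 ^ l / fact l))
      + (\<Sum>l<l1. p2 l * (1 - exp (-d1) * (\<Sum>j<m l. d1 ^ j / fact j)))"
    unfolding W2 p2_def by (simp add: sum_distrib_left sum_subtractf algebra_simps)
  have "(\<Sum>l<l1. p2 l * (1 - exp (-d1) * (\<Sum>j<m l. d1 ^ j / fact j))) < (\<Sum>l<l1. eps22)"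
    by (rule sum_strict_mono) (use assms(9,11) in \<open>auto simp: p2_def\<close>)
  hence part2: "1 - W < eps21 + real l1 * eps22" using split assms(10) by simp
  show ?thesis using part1 part2 Weq by simp
qed

end
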